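(* Let $\Box$ be an axis-parallel square of side length $1/2$, $l$ the line containing its top edge, $H$ the open halfplane above $l$, and $u_1,\dots,u_N$ points in $\Box$. Define subdivisions $\varPhi_0,\dots,\varPhi_N$ of $H$: $\varPhi_0$ has the single face $F_0=H$ (its outer face); given $\varPhi_{i-1}$ with outer face $F_{i-1}=H\setminus\bigcup_{j<i}\odot_{u_j}$, obtain $\varPhi_i$ by splitting $F_{i-1}$ into the face $F_i=F_{i-1}\setminus\odot_{u_i}$ (the new outer face) and the connected components of $F_{i-1}\cap\odot_{u_i}$, each of which is labeled $i$; all other faces are kept. Let $\varPhi=\varPhi_N$. Then $\varPhi$ has complexity $O(N)$, and for each $i\in\{1,\dots,N\}$, $\varPhi$ has at most one face labeled $i$.
   Context: $\odot_a$ denotes the closed disk of radius 1 centered at $a$ (Euclidean norm). *)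

theory Defs
  imports "HOL-Analysis.Analysis"
begin

text \<open>Points of the plane are pairs of reals; the norm on real \<times> real is Euclidean,
  so the closed unit disk centred at a is cball a 1.
  The square is {a..a+1/2} \<times> {b..b+1/2}; its top edge lies on the line y = b + 1/2.\<close>

definition sq :: "real \<Rightarrow> real \<Rightarrow> (real \<times> real) set" where
  "sq a b = {p. a \<le> fst p \<and> fst p \<le> a + 1/2 \<and> b \<le> snd p \<and> snd p \<le> b + 1/2}"

definition topline :: "real \<Rightarrow> (real \<times> real) set" where
  "topline t = {p. snd p = t}"

definition halfplane :: "real \<Rightarrow> (real \<times> real) set" where
  "halfplane t = {p. snd p > t}"

definition outer_face :: "real \<Rightarrow> (nat \<Rightarrow> real \<times> real) \<Rightarrow> nat \<Rightarrow> (real \<times> real) set" where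
  "outer_face t u i = halfplane t - (\<Union>j\<in>{1..i}. cball (u j) 1)"

definition labeled_faces :: "real \<Rightarrow> (nat \<Rightarrow> real \<times> real) \<Rightarrow> nat \<Rightarrow> (real \<times> real) set set" where
  "labeled_faces t u i = components (outer_face t u (i - 1) \<inter> cball (u i) 1)"

definition faces :: "real \<Rightarrow> (nat \<Rightarrow> real \<times> real) \<Rightarrow> nat \<Rightarrow> (real \<times> real) set set" where
  "faces t u N = insert (outer_face t u N) (\<Union>i\<in>{1..N}. labeled_faces t u i)"

definition curves :: "real \<Rightarrow> (nat \<Rightarrow> real \<times> real) \<Rightarrow> nat \<Rightarrow> (real \<times> real) set set" where
  "curves t u N = insert (topline t) ((\<lambda>j. sphere (u j) 1) ` {1..N})"

definition skeleton :: "real \<Rightarrow> (nat \<Rightarrow> real \<times> real) \<Rightarrow> nat \<Rightarrow> (real \<times> real) set" where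
  "skeleton t u N = (\<Union>F\<in>faces t u N. frontier F)"

text \<open>Vertices: points of the skeleton near which the skeleton is not locally a single
  one of the curves (crossings, tangencies, endpoints of arcs).\<close>
definition vertices :: "real \<Rightarrow> (nat \<Rightarrow> real \<times> real) \<Rightarrow> nat \<Rightarrow> (real \<times> real) set" where
  "vertices t u N = {p \<in> skeleton t u N. \<not> (\<exists>e>0. \<exists>C\<in>curves t u N.
      skeleton t u N \<inter> ball p e = C \<inter> ball p e)}"

definition edges :: "real \<Rightarrow> (nat \<Rightarrow> real \<times> real) \<Rightarrow> nat \<Rightarrow> (real \<times> real) set set" where
  "edges t u N = components (skeleton t u N - vertices t u N)"

definition complexity :: "real \<Rightarrow> (nat \<Rightarrow> real \<times> real) \<Rightarrow> nat \<Rightarrow> nat" where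
  "complexity t u N = card (faces t u N) + card (vertices t u N) + card (edges t u N)"

end

theory Submission
  imports Defs "HOL-Analysis.Analysis"
begin


lemma sqrt_pos_iff: "0 < sqrt a \<longleftrightarrow> 0 < (a::real)"
  by (metis real_sqrt_less_iff real_sqrt_zero)

lemma sqrt_concave:
  fixes X Y l :: real
  assumes "X^2 \<le> 1" "Y^2 \<le> 1" "0 \<le> l" "l \<le> 1"
  shows "l * sqrt (1 - X^2) + (1 - l) * sqrt (1 - Y^2) \<le> sqrt (1 - (l * X + (1 - l) * Y)^2)"
proof -
  define s1 where "s1 = sqrt (1 - X^2)"
  define s3 where "s3 = sqrt (1 - Y^2)"
  have s1: "s1 \<ge> 0" "s1^2 = 1 - X^2" using assms by (auto simp: s1_def)
  have s3: "s3 \<ge> 0" "s3^2 = 1 - Y^2" using assms by (auto simp: s3_def)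
  have key: "2 * (s1 * s3 + X * Y) \<le> 2"
  proof -
    have "0 \<le> (s1 - s3)^2 + (X - Y)^2" by simp
    then show ?thesis using s1 s3 by (simp add: power2_diff algebra_simps)
  qed
  have eq: "(l * s1 + (1 - l) * s3)^2 + (l * X + (1 - l) * Y)^2
      = l^2 * (s1^2 + X^2) + (1-l)^2 * (s3^2 + Y^2) + l * (1 - l) * (2 * (s1 * s3 + X * Y))"
    by (simp add: power2_sum power_mult_distrib algebra_simps power2_eq_square)
  have lm: "0 \<le> l * (1 - l)" using assms by simp
  have "l * (1 - l) * (2 * (s1 * s3 + X * Y)) \<le> l * (1 - l) * 2"
    using mult_left_mono[OF key lm] by simp
  then have "(l * s1 + (1 - l) * s3)^2 + (l * X + (1 - l) * Y)^2 \<le> l^2 + (1-l)^2 + l * (1 - l) * 2"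
    using eq s1 s3 by simp
  also have "\<dots> = 1" by (simp add: power2_eq_square algebra_simps)
  finally have "(l * s1 + (1 - l) * s3)^2 \<le> 1 - (l * X + (1 - l) * Y)^2" by simp
  then show ?thesis unfolding s1_def[symmetric] s3_def[symmetric] by (rule real_le_rsqrt)
qed

lemma core_pos:
  fixes h a b X2 X3 :: real
  assumes h: "0 \<le> h" "h \<le> 1/2" and a: "0 \<le> a" "a \<le> 1/2" and b: "0 < b" "b \<le> h"
    and o: "X2 \<le> X3" and x2: "X2^2 \<le> 1" and x3: "X3^2 < 1 - h^2"
    and g2: "a^2 + b^2 \<le> 2 * (a * X2 + b * sqrt (1 - X2^2))"
  shows "a^2 + b^2 \<le> 2 * (a * X3 + b * sqrt (1 - X3^2))"
proof -
  define W where "W = sqrt (1 - h^2)"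
  have h1: "h^2 \<le> 1" using h by (intro power_le_one) auto
  have W2: "W^2 = 1 - h^2" using h1 by (simp add: W_def)
  have Wpos: "W \<ge> 0" using h1 by (simp add: W_def)
  have W12: "1/2 \<le> W"
  proof (rule real_le_rsqrt[of "1/2" "1 - h^2", folded W_def])
    have "h^2 \<le> (1/2)^2" using h by (intro power_mono) auto
    then show "(1/2)^2 \<le> 1 - h^2" by (simp add: power2_eq_square)
  qed
  have X3W: "X3 < W"
  proof (rule ccontr)
    assume "\<not> X3 < W"
    then have "W \<le> X3" by simp
    then have "W^2 \<le> X3^2" using Wpos by (intro power_mono) auto
    then show False using W2 x3 by simp
  qed
  have sW: "sqrt (1 - W^2) = h" using W2 h by simp
  have gW: "a^2 + b^2 \<le> 2 * (a * W + b * h)"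
  proof -
    have A: "a * a \<le> a * W" using a W12 by (intro mult_left_mono) auto
    have B: "b * b \<le> b * h" using b by (intro mult_left_mono) auto
    have C: "0 \<le> a * W" "0 \<le> b * h" using a b Wpos by auto
    have D: "a * a + b * b \<le> a * W + b * h" using add_mono[OF A B] .
    have E: "a * W + b * h \<le> 2 * (a * W + b * h)" using add_nonneg_nonneg[OF C] by (simp add: ac_simps)
    show ?thesis using order_trans[OF D E] by (simp add: power2_eq_square)
  qed
  define m where "m = (W - X3) / (W - X2)"
  have WX2: "0 < W - X2" using o X3W by simp
  have m01: "0 \<le> m" "m \<le> 1" using WX2 X3W o by (auto simp: m_def field_simps)
  have mm: "m * (W - X2) = W - X3" using WX2 by (simp add: m_def)
  have "m * X2 + (1 - m) * W = W - m * (W - X2)" by (simp add: algebra_simps)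
  then have X3eq: "X3 = m * X2 + (1 - m) * W" using mm by linarith
  have W1: "W^2 \<le> 1" using W2 by simp
  have conc: "m * sqrt (1 - X2^2) + (1 - m) * sqrt (1 - W^2) \<le> sqrt (1 - X3^2)"
    using sqrt_concave[OF x2 W1 m01] X3eq by simp
  have "a^2 + b^2 \<le> m * (2 * (a * X2 + b * sqrt (1 - X2^2))) + (1 - m) * (2 * (a * W + b * h))"
  proof -
    have "m * (a^2 + b^2) \<le> m * (2 * (a * X2 + b * sqrt (1 - X2^2)))"
      using g2 m01 by (intro mult_left_mono) auto
    moreover have "(1 - m) * (a^2 + b^2) \<le> (1 - m) * (2 * (a * W + b * h))"
      using gW m01 by (intro mult_left_mono) auto
    ultimately show ?thesis by (simp add: algebra_simps)
  qed
  also have "\<dots> = 2 * (a * (m * X2 + (1 - m) * W) + b * (m * sqrt (1 - X2^2) + (1 - m) * sqrt (1 - W^2)))"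
    using sW by (simp add: algebra_simps)
  also have "\<dots> \<le> 2 * (a * X3 + b * sqrt (1 - X3^2))"
    using conc b X3eq by (simp add: mult_left_mono)
  finally show ?thesis .
qed

lemma core:
  fixes h a b X1 X2 X3 :: real
  assumes h: "0 \<le> h" "h \<le> 1/2" and a: "\<bar>a\<bar> \<le> 1/2" and b: "b \<le> h"
    and o: "X1 \<le> X2" "X2 \<le> X3" and x1: "X1^2 < 1 - h^2" and x3: "X3^2 < 1 - h^2"
    and g1: "2 * (a * X1 + b * sqrt (1 - X1^2)) < a^2 + b^2"
    and g3: "2 * (a * X3 + b * sqrt (1 - X3^2)) < a^2 + b^2"
  shows "2 * (a * X2 + b * sqrt (1 - X2^2)) < a^2 + b^2"
proof -
  have x2: "X2^2 < 1 - h^2"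
  proof (cases "0 \<le> X2")
    case True
    then have "X2^2 \<le> X3^2" using o by (intro power_mono) auto
    then show ?thesis using x3 by simp
  next
    case False
    then have "(-X2)^2 \<le> (-X1)^2" using o by (intro power_mono) auto
    then show ?thesis using x1 by simp
  qed
  have h2: "h^2 \<ge> 0" by simp
  show ?thesis
  proof (cases "b \<le> 0")
    case True
    show ?thesis
    proof (cases "X1 = X3")
      case True then show ?thesis using o g1 by (metis order_antisym)
    next
      case False
      then have d: "0 < X3 - X1" using o by simp
      define l where "l = (X3 - X2) / (X3 - X1)"
      have l01: "0 \<le> l" "l \<le> 1" using d o by (auto simp: l_def field_simps)
      have lm: "l * (X3 - X1) = X3 - X2" using d by (simp add: l_def)
      have "l * X1 + (1 - l) * X3 = X3 - l * (X3 - X1)" by (simp add: algebra_simps)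
      then have X2eq: "X2 = l * X1 + (1 - l) * X3" using lm by linarith
      have "X1^2 \<le> 1" "X3^2 \<le> 1" using x1 x3 h2 by linarith+
      from sqrt_concave[OF this l01] X2eq
      have conc: "l * sqrt (1 - X1^2) + (1 - l) * sqrt (1 - X3^2) \<le> sqrt (1 - X2^2)" by simp
      have "2 * (a * X2 + b * sqrt (1 - X2^2)) \<le> 2 * (a * X2 + b * (l * sqrt (1 - X1^2) + (1 - l) * sqrt (1 - X3^2)))"
        using conc True by (simp add: mult_left_mono_neg)
      also have "\<dots> = l * (2 * (a * X1 + b * sqrt (1 - X1^2))) + (1 - l) * (2 * (a * X3 + b * sqrt (1 - X3^2)))"
        using X2eq by algebra
      also have "\<dots> < a^2 + b^2"
      proof (cases "l = 0")
        case True then show ?thesis using g3 by simp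
      next
        case False
        then have "l * (2 * (a * X1 + b * sqrt (1 - X1^2))) < l * (a^2 + b^2)"
          using l01 g1 by (intro mult_strict_left_mono) auto
        moreover have "(1 - l) * (2 * (a * X3 + b * sqrt (1 - X3^2))) \<le> (1 - l) * (a^2 + b^2)"
          using l01 g3 by (intro mult_left_mono) auto
        ultimately show ?thesis by (simp add: algebra_simps)
      qed
      finally show ?thesis .
    qed
  next
    case False
    then have bpos: "0 < b" by simp
    show ?thesis
    proof (rule ccontr)
      assume "\<not> ?thesis"
      then have g2: "a^2 + b^2 \<le> 2 * (a * X2 + b * sqrt (1 - X2^2))" by simp
      have x2': "X2^2 \<le> 1" using x2 h2 by linarith
      show False
      proof (cases "0 \<le> a")
        case True
        have "a \<le> 1/2" using a by simp
        from core_pos[OF h True this bpos b o(2) x2' x3 g2] g3 show False by simp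
      next
        case False
        have "0 \<le> -a" "-a \<le> 1/2" using False a by auto
        moreover have "-X2 \<le> -X1" using o by simp
        moreover have "(-X2)^2 \<le> 1" "(-X1)^2 < 1 - h^2" using x2' x1 by simp_all
        moreover have "(-a)^2 + b^2 \<le> 2 * ((-a) * (-X2) + b * sqrt (1 - (-X2)^2))" using g2 by simp
        ultimately have "(-a)^2 + b^2 \<le> 2 * ((-a) * (-X1) + b * sqrt (1 - (-X1)^2))"
          using core_pos[OF h _ _ bpos b] by blast
        then show False using g1 by simp
      qed
    qed
  qed
qed




definition ff :: "real \<Rightarrow> real \<times> real \<Rightarrow> real \<Rightarrow> real" where
  "ff t c x = max t (snd c + sqrt (1 - (x - fst c)^2))"

primrec env :: "real \<Rightarrow> (nat \<Rightarrow> real \<times> real) \<Rightarrow> nat \<Rightarrow> real \<Rightarrow> real" where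
  "env t u 0 x = t"
| "env t u (Suc k) x = max (env t u k x) (ff t (u (Suc k)) x)"

definition JJ :: "real \<Rightarrow> (nat \<Rightarrow> real \<times> real) \<Rightarrow> nat \<Rightarrow> real set" where
  "JJ t u i = {x. env t u (i - 1) x < ff t (u i) x}"

lemma dist_pp: "dist (a::real, b::real) (c, d) = sqrt ((a - c)^2 + (b - d)^2)"
  by (simp add: dist_Pair_Pair dist_real_def)

lemma ff_ge: "t \<le> ff t c x" by (simp add: ff_def)

lemma env_ge: "t \<le> env t u k x" by (induction k) auto

lemma env_mono: "k \<le> m \<Longrightarrow> env t u k x \<le> env t u m x"
proof (induction m)
  case 0 then show ?case by simp
next
  case (Suc m) then show ?case by (cases "k = Suc m") (auto simp: le_Suc_eq intro: le_trans)
qed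

lemma env_Suc': "1 \<le> i \<Longrightarrow> env t u i x = max (env t u (i - 1) x) (ff t (u i) x)"
  by (cases i) auto

lemma cont_ff [continuous_intros]: "continuous_on S f \<Longrightarrow> continuous_on S (\<lambda>x. ff t c (f x))"
  unfolding ff_def by (intro continuous_intros)

lemma cont_env [continuous_intros]: "continuous_on S f \<Longrightarrow> continuous_on S (\<lambda>x. env t u k (f x))"
  by (induction k) (auto intro!: continuous_intros)

lemma isCont_env: "isCont (env t u k) x"
proof -
  have "continuous_on UNIV (env t u k)" using cont_env[OF continuous_on_id] by simp
  then show ?thesis by (simp add: continuous_on_eq_continuous_at)
qed

lemma disk_char:
  assumes "snd c \<le> t" "t < y"
  shows "(x, y) \<in> cball c 1 \<longleftrightarrow> y \<le> ff t c x"
proof -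
  obtain p q where c: "c = (p, q)" by (cases c)
  have "(x, y) \<in> cball c 1 \<longleftrightarrow> (x - p)^2 + (y - q)^2 \<le> 1"
    by (simp add: c dist_pp power2_commute)
  also have "\<dots> \<longleftrightarrow> y \<le> ff t c x"
  proof
    assume h: "(x - p)^2 + (y - q)^2 \<le> 1"
    have "y - q \<le> sqrt (1 - (x - p)^2)"
      using h assms c by (intro real_le_rsqrt) auto
    then show "y \<le> ff t c x" by (simp add: ff_def c)
  next
    assume h: "y \<le> ff t c x"
    then have h2: "y \<le> q + sqrt (1 - (x - p)^2)" using assms by (auto simp: ff_def c)
    have "q \<le> t" using assms c by auto
    then have "0 < sqrt (1 - (x - p)^2)" using h2 assms by linarith
    then have pos: "0 < 1 - (x - p)^2" using sqrt_pos_iff by blast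
    have "0 \<le> y - q" using assms c by auto
    have "(y - q)^2 \<le> (sqrt (1 - (x - p)^2))^2"
      using h2 \<open>0 \<le> y - q\<close> by (intro power_mono) auto
    then show "(x - p)^2 + (y - q)^2 \<le> 1" using pos by simp
  qed
  finally show ?thesis .
qed

lemma cball_iff: "((x::real), (y::real)) \<in> cball (p, q) 1 \<longleftrightarrow> (x - p)^2 + (y - q)^2 \<le> 1"
  by (simp add: dist_pp power2_commute)

lemma sphere_iff: "((x::real), (y::real)) \<in> sphere (p, q) 1 \<longleftrightarrow> (x - p)^2 + (y - q)^2 = 1"
  by (simp add: dist_pp power2_commute)

lemma env_less_iff: "env t u k x < y \<longleftrightarrow> t < y \<and> (\<forall>j\<in>{1..k}. ff t (u j) x < y)"
proof (induction k)
  case 0 then show ?case by simp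
next
  case (Suc k)
  have "{1..Suc k} = insert (Suc k) {1..k}" by auto
  then show ?case using Suc by auto
qed

lemma ff_gt_t:
  assumes "snd c \<le> t"
  shows "t < ff t c x \<longleftrightarrow> (x - fst c)^2 < 1 - (t - snd c)^2"
proof
  assume "t < ff t c x"
  then have h: "t - snd c < sqrt (1 - (x - fst c)^2)" by (simp add: ff_def)
  then have "0 < sqrt (1 - (x - fst c)^2)" using assms by linarith
  then have A: "0 < 1 - (x - fst c)^2" by (simp add: sqrt_pos_iff)
  have "(t - snd c)^2 < (sqrt (1 - (x - fst c)^2))^2"
    using h assms by (intro power_strict_mono) auto
  then show "(x - fst c)^2 < 1 - (t - snd c)^2" using A by simp
next
  assume "(x - fst c)^2 < 1 - (t - snd c)^2"
  then have "t - snd c < sqrt (1 - (x - fst c)^2)" by (intro real_less_rsqrt) simp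
  then show "t < ff t c x" by (simp add: ff_def)
qed

lemma ff_eq_top: "t < ff t c x \<Longrightarrow> ff t c x = snd c + sqrt (1 - (x - fst c)^2)"
  by (simp add: ff_def)

lemma ff_pair:
  assumes c: "snd c \<le> t" and c': "snd c' \<le> t" and tf: "t < ff t c x"
  shows "ff t c' x < ff t c x \<longleftrightarrow>
    2 * ((fst c' - fst c) * (x - fst c) + (snd c' - snd c) * sqrt (1 - (x - fst c)^2))
      < (fst c' - fst c)^2 + (snd c' - snd c)^2"
proof -
  obtain p q where pq: "c = (p, q)" by (cases c)
  obtain p' q' where pq': "c' = (p', q')" by (cases c')
  define X where "X = x - p"
  define s where "s = sqrt (1 - X^2)"
  have X2: "X^2 < 1" using ff_gt_t[OF c] tf pq X_def
    by (smt (verit) fst_conv snd_conv zero_le_power2)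
  have s2: "s^2 = 1 - X^2" using X2 by (simp add: s_def)
  have Y: "ff t c x = q + s" using ff_eq_top[OF tf] pq by (simp add: s_def X_def)
  have "ff t c' x < ff t c x \<longleftrightarrow> \<not> (x, q + s) \<in> cball c' 1"
    using disk_char[OF c', of "q + s" x] tf Y by auto
  also have "\<dots> \<longleftrightarrow> 1 < (x - p')^2 + (q + s - q')^2" using cball_iff[of x "q + s" p' q'] pq' by auto
  also have "(x - p')^2 + (q + s - q')^2 = X^2 + s^2 - 2 * ((p' - p) * X + (q' - q) * s) + ((p' - p)^2 + (q' - q)^2)"
    by (simp add: X_def power2_eq_square algebra_simps)
  also have "\<dots> = 1 - 2 * ((p' - p) * X + (q' - q) * s) + ((p' - p)^2 + (q' - q)^2)" using s2 by simp
  finally show ?thesis by (simp add: pq pq' X_def s_def) (smt (verit))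
qed

locale setting =
  fixes t :: real and u :: "nat \<Rightarrow> real \<times> real" and N :: nat and a0 :: real
  assumes hx: "\<And>i. i \<in> {1..N} \<Longrightarrow> a0 \<le> fst (u i) \<and> fst (u i) \<le> a0 + 1/2"
    and hy: "\<And>i. i \<in> {1..N} \<Longrightarrow> t - 1/2 \<le> snd (u i) \<and> snd (u i) \<le> t"

context setting
begin

lemma union_char:
  "k \<le> N \<Longrightarrow> t < y \<Longrightarrow> (x, y) \<in> (\<Union>j\<in>{1..k}. cball (u j) 1) \<longleftrightarrow> y \<le> env t u k x"
proof (induction k)
  case 0 then show ?case by simp
next
  case (Suc k)
  have "{1..Suc k} = insert (Suc k) {1..k}" by auto
  moreover have "(x, y) \<in> cball (u (Suc k)) 1 \<longleftrightarrow> y \<le> ff t (u (Suc k)) x"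
    using Suc.prems hy[of "Suc k"] by (intro disk_char) auto
  ultimately show ?case using Suc by auto
qed

lemma outer_face_eq: "k \<le> N \<Longrightarrow> outer_face t u k = {p. env t u k (fst p) < snd p}"
proof (intro set_eqI)
  fix p :: "real \<times> real"
  assume k: "k \<le> N"
  obtain x y where p: "p = (x, y)" by (cases p)
  show "p \<in> outer_face t u k \<longleftrightarrow> p \<in> {p. env t u k (fst p) < snd p}"
  proof (cases "t < y")
    case True
    then show ?thesis using union_char[OF k True, of x] p
      by (auto simp: outer_face_def halfplane_def)
  next
    case False
    then show ?thesis using env_ge[of t u k x] p
      by (auto simp: outer_face_def halfplane_def)
  qed
qed

lemma G_eq:
  assumes i: "i \<in> {1..N}"
  shows "outer_face t u (i - 1) \<inter> cball (u i) 1 = {p. env t u (i - 1) (fst p) < snd p \<and> snd p \<le> env t u i (fst p)}"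
proof (intro set_eqI)
  fix p :: "real \<times> real"
  obtain x y where p: "p = (x, y)" by (cases p)
  have of: "outer_face t u (i - 1) = {p. env t u (i - 1) (fst p) < snd p}"
    using i by (intro outer_face_eq) auto
  have e: "env t u i x = max (env t u (i - 1) x) (ff t (u i) x)" using i env_Suc' by auto
  show "p \<in> outer_face t u (i - 1) \<inter> cball (u i) 1 \<longleftrightarrow> p \<in> {p. env t u (i - 1) (fst p) < snd p \<and> snd p \<le> env t u i (fst p)}"
  proof (cases "env t u (i - 1) x < y")
    case True
    have ty: "t < y" using True env_ge[of t u "i - 1" x] by linarith
    have "(x, y) \<in> cball (u i) 1 \<longleftrightarrow> y \<le> ff t (u i) x"
      using ty hy[OF i] by (intro disk_char) auto
    then show ?thesis using True of p e by auto
  next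
    case False
    then show ?thesis using of p by auto
  qed
qed

lemma JJ_iff: "i \<in> {1..N} \<Longrightarrow> x \<in> JJ t u i \<longleftrightarrow> t < ff t (u i) x \<and> (\<forall>j\<in>{1..i-1}. ff t (u j) x < ff t (u i) x)"
  by (simp add: JJ_def env_less_iff)

lemma JJ_between:
  assumes i: "i \<in> {1..N}" and x1: "x1 \<in> JJ t u i" and x3: "x3 \<in> JJ t u i"
    and o: "x1 \<le> x2" "x2 \<le> x3"
  shows "x2 \<in> JJ t u i"
proof -
  define p where "p = fst (u i)"
  define q where "q = snd (u i)"
  define h where "h = t - q"
  have h: "0 \<le> h" "h \<le> 1/2" using hy[OF i] by (auto simp: h_def q_def)
  have ci: "snd (u i) \<le> t" using hy[OF i] by simp
  have t1: "t < ff t (u i) x1" and t3: "t < ff t (u i) x3" using x1 x3 JJ_iff[OF i] by auto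
  have X1: "(x1 - p)^2 < 1 - h^2" and X3: "(x3 - p)^2 < 1 - h^2"
    using t1 t3 ff_gt_t[OF ci] by (auto simp: p_def h_def q_def)
  have X2: "(x2 - p)^2 < 1 - h^2"
  proof (cases "0 \<le> x2 - p")
    case True
    then have "(x2 - p)^2 \<le> (x3 - p)^2" using o by (intro power_mono) auto
    then show ?thesis using X3 by simp
  next
    case False
    then have "(p - x2)^2 \<le> (p - x1)^2" using o by (intro power_mono) auto
    then show ?thesis using X1 by (simp add: power2_commute)
  qed
  have t2: "t < ff t (u i) x2" using X2 ff_gt_t[OF ci] by (auto simp: p_def h_def q_def)
  have "ff t (u j) x2 < ff t (u i) x2" if j: "j \<in> {1..i-1}" for j
  proof -
    have jN: "j \<in> {1..N}" using j i by auto
    have cj: "snd (u j) \<le> t" using hy[OF jN] by simp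
    have a: "\<bar>fst (u j) - fst (u i)\<bar> \<le> 1/2" using hx[OF i] hx[OF jN] by (auto simp: abs_if)
    have b: "snd (u j) - snd (u i) \<le> h" using cj by (simp add: h_def q_def)
    have g1: "ff t (u j) x1 < ff t (u i) x1" and g3: "ff t (u j) x3 < ff t (u i) x3"
      using x1 x3 JJ_iff[OF i] j by auto
    have o': "x1 - p \<le> x2 - p" "x2 - p \<le> x3 - p" using o by auto
    have g1': "2 * ((fst (u j) - fst (u i)) * (x1 - p) + (snd (u j) - snd (u i)) * sqrt (1 - (x1 - p)^2))
      < (fst (u j) - fst (u i))^2 + (snd (u j) - snd (u i))^2"
      using ff_pair[OF ci cj t1] g1 by (simp add: p_def)
    have g3': "2 * ((fst (u j) - fst (u i)) * (x3 - p) + (snd (u j) - snd (u i)) * sqrt (1 - (x3 - p)^2))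
      < (fst (u j) - fst (u i))^2 + (snd (u j) - snd (u i))^2"
      using ff_pair[OF ci cj t3] g3 by (simp add: p_def)
    show ?thesis
      unfolding ff_pair[OF ci cj t2]
      using core[OF h a b o' X1 X3 g1' g3'] by (simp add: p_def)
  qed
  then show ?thesis using JJ_iff[OF i] t2 by auto
qed

end




lemma env_cont: "continuous_on S (env t u k)"
  using cont_env[OF continuous_on_id] by simp

lemma frontier_pt:
  assumes "q \<notin> S" "\<And>e. e > 0 \<Longrightarrow> \<exists>z\<in>S. dist z q < e"
  shows "q \<in> frontier S"
proof -
  have "q \<in> closure S" using assms(2) by (simp add: closure_approachable)
  moreover have "q \<notin> interior S" using assms(1) interior_subset by blast
  ultimately show ?thesis by (simp add: frontier_def)
qed

definition GG :: "real \<Rightarrow> (nat \<Rightarrow> real \<times> real) \<Rightarrow> nat \<Rightarrow> (real \<times> real) set" where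
  "GG t u i = {p. env t u (i - 1) (fst p) < snd p \<and> snd p \<le> env t u i (fst p)}"

definition Gam :: "real \<Rightarrow> (nat \<Rightarrow> real \<times> real) \<Rightarrow> nat \<Rightarrow> (real \<times> real) set" where
  "Gam t u N = {(x, env t u k x) | x k. k \<le> N}"

lemma JJ_open: "open (JJ t u i)"
  unfolding JJ_def by (intro open_Collect_less continuous_intros env_cont)

lemma env_gt_JJ: "1 \<le> i \<Longrightarrow> env t u (i - 1) x < env t u i x \<longleftrightarrow> x \<in> JJ t u i"
  using env_Suc'[of i t u x] by (auto simp: JJ_def)

lemma env_JJ: "1 \<le> i \<Longrightarrow> x \<in> JJ t u i \<Longrightarrow> env t u i x = ff t (u i) x"
  using env_Suc'[of i t u x] by (auto simp: JJ_def)

lemma env_notJJ: "1 \<le> i \<Longrightarrow> x \<notin> JJ t u i \<Longrightarrow> env t u i x = env t u (i - 1) x"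
  using env_Suc'[of i t u x] by (auto simp: JJ_def)

context setting
begin

lemma JJ_interval: "i \<in> {1..N} \<Longrightarrow> is_interval (JJ t u i)"
  unfolding is_interval_1 using JJ_between by blast

lemma GG_connected:
  assumes i: "i \<in> {1..N}"
  shows "connected (GG t u i)"
proof -
  define h where "h = (\<lambda>z::real \<times> real. (fst z, env t u (i - 1) (fst z) + snd z * (env t u i (fst z) - env t u (i - 1) (fst z))))"
  have i1: "1 \<le> i" using i by simp
  have "GG t u i = h ` (JJ t u i \<times> {0<..1})"
  proof (intro set_eqI iffI)
    fix p assume p: "p \<in> GG t u i"
    obtain x y where xy: "p = (x, y)" by (cases p)
    have lt: "env t u (i - 1) x < y" "y \<le> env t u i x" using p xy by (auto simp: GG_def)
    then have xJ: "x \<in> JJ t u i" using env_gt_JJ[OF i1] by force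
    define s where "s = (y - env t u (i - 1) x) / (env t u i x - env t u (i - 1) x)"
    have d: "0 < env t u i x - env t u (i - 1) x" using lt by simp
    have s: "0 < s" "s \<le> 1" using lt d by (auto simp: s_def field_simps)
    have "h (x, s) = (x, y)" using d by (simp add: h_def s_def)
    then show "p \<in> h ` (JJ t u i \<times> {0<..1})" using xJ s xy by force
  next
    fix p assume "p \<in> h ` (JJ t u i \<times> {0<..1})"
    then obtain x s where xs: "x \<in> JJ t u i" "0 < s" "s \<le> 1" and p: "p = h (x, s)" by auto
    have d: "0 < env t u i x - env t u (i - 1) x" using env_gt_JJ[OF i1] xs by simp
    have "s * (env t u i x - env t u (i - 1) x) \<le> 1 * (env t u i x - env t u (i - 1) x)"
      using xs d by (intro mult_right_mono) auto
    moreover have "0 < s * (env t u i x - env t u (i - 1) x)" using xs d by simp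
    ultimately show "p \<in> GG t u i" using p by (simp add: GG_def h_def)
  qed
  note eq = this
  have c1: "connected (JJ t u i)" using JJ_interval[OF i] is_interval_connected_1 by blast
  have "is_interval {0<..1::real}" unfolding is_interval_1 by auto
  then have c2: "connected {0<..1::real}" using is_interval_connected_1 by blast
  have conn: "connected (JJ t u i \<times> {0<..1::real})" using connected_Times[OF c1 c2] .
  have cont: "continuous_on (JJ t u i \<times> {0<..1}) h"
    unfolding h_def by (intro continuous_intros)
  show ?thesis unfolding eq by (rule connected_continuous_image[OF cont conn])
qed

lemma labeled_faces_sub: "i \<in> {1..N} \<Longrightarrow> labeled_faces t u i \<subseteq> {GG t u i}"
proof -
  assume i: "i \<in> {1..N}"
  have eq: "outer_face t u (i - 1) \<inter> cball (u i) 1 = GG t u i" using G_eq[OF i] by (simp add: GG_def)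
  show ?thesis
  proof (cases "GG t u i = {}")
    case True then show ?thesis unfolding labeled_faces_def eq by simp
  next
    case False
    then have "components (GG t u i) = {GG t u i}" using GG_connected[OF i] components_eq_sing_iff by blast
    then show ?thesis unfolding labeled_faces_def eq by simp
  qed
qed

lemma labeled_faces_eq: "i \<in> {1..N} \<Longrightarrow> GG t u i \<noteq> {} \<Longrightarrow> labeled_faces t u i = {GG t u i}"
proof -
  assume i: "i \<in> {1..N}" and ne: "GG t u i \<noteq> {}"
  have eq: "outer_face t u (i - 1) \<inter> cball (u i) 1 = GG t u i" using G_eq[OF i] by (simp add: GG_def)
  have "components (GG t u i) = {GG t u i}" using GG_connected[OF i] ne components_eq_sing_iff by blast
  then show ?thesis unfolding labeled_faces_def eq by simp
qed

lemma faces_sub: "faces t u N \<subseteq> insert (outer_face t u N) (GG t u ` {1..N})"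
proof -
  have "(\<Union>i\<in>{1..N}. labeled_faces t u i) \<subseteq> GG t u ` {1..N}"
  proof (rule UN_least)
    fix i assume i: "i \<in> {1..N}"
    show "labeled_faces t u i \<subseteq> GG t u ` {1..N}" using labeled_faces_sub[OF i] i by blast
  qed
  then show ?thesis unfolding faces_def by (rule insert_mono)
qed

lemma faces_finite: "finite (faces t u N)"
  using faces_sub finite_subset by blast

lemma faces_card: "card (faces t u N) \<le> N + 1"
proof -
  have "card (faces t u N) \<le> card (insert (outer_face t u N) (GG t u ` {1..N}))"
    using faces_sub by (intro card_mono) auto
  also have "\<dots> \<le> card (GG t u ` {1..N}) + 1" by (simp add: card_insert_le_m1 card_insert_if)
  also have "\<dots> \<le> N + 1" using card_image_le[of "{1..N}" "GG t u"] by simp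
  finally show ?thesis .
qed

lemma frontier_outer: "frontier (outer_face t u N) \<subseteq> Gam t u N"
proof -
  have of: "outer_face t u N = {p. env t u N (fst p) < snd p}" using outer_face_eq by simp
  have op: "open (outer_face t u N)" unfolding of by (intro open_Collect_less continuous_intros env_cont)
  have "closure (outer_face t u N) \<subseteq> {p. env t u N (fst p) \<le> snd p}"
    unfolding of by (intro closure_minimal closed_Collect_le continuous_intros env_cont) auto
  note A = this
  have B: "interior (outer_face t u N) = outer_face t u N" using interior_open[OF op] .
  have "frontier (outer_face t u N) \<subseteq> {p. env t u N (fst p) = snd p}"
  proof
    fix q assume "q \<in> frontier (outer_face t u N)"
    then have Q: "q \<in> closure (outer_face t u N)" "q \<notin> interior (outer_face t u N)"
      unfolding frontier_def by (metis DiffD1, metis DiffD2)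
    have "env t u N (fst q) \<le> snd q" using A Q(1) by blast
    moreover have "\<not> env t u N (fst q) < snd q" using Q(2) B of by auto
    ultimately have "env t u N (fst q) \<le> snd q" "\<not> env t u N (fst q) < snd q" by auto
    then show "q \<in> {p. env t u N (fst p) = snd p}" by auto
  qed
  also have "\<dots> \<subseteq> Gam t u N" unfolding Gam_def by (auto intro: exI[of _ N])
  finally show ?thesis .
qed

lemma frontier_GG: "i \<in> {1..N} \<Longrightarrow> frontier (GG t u i) \<subseteq> Gam t u N"
proof -
  assume i: "i \<in> {1..N}"
  have "closure (GG t u i) \<subseteq> {p. env t u (i - 1) (fst p) \<le> snd p \<and> snd p \<le> env t u i (fst p)}"
    unfolding GG_def by (intro closure_minimal closed_Collect_conj closed_Collect_le continuous_intros env_cont) auto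
  note AB1 = this
  have AB2: "{p. env t u (i - 1) (fst p) < snd p \<and> snd p < env t u i (fst p)} \<subseteq> interior (GG t u i)"
    unfolding GG_def by (intro interior_maximal open_Collect_conj open_Collect_less continuous_intros env_cont) auto
  have "frontier (GG t u i) \<subseteq> {p. env t u (i - 1) (fst p) = snd p \<or> snd p = env t u i (fst p)}"
  proof
    fix q assume "q \<in> frontier (GG t u i)"
    then have Q: "q \<in> closure (GG t u i)" "q \<notin> interior (GG t u i)"
      unfolding frontier_def by (metis DiffD1, metis DiffD2)
    have "env t u (i - 1) (fst q) \<le> snd q \<and> snd q \<le> env t u i (fst q)" using AB1 Q(1) by blast
    moreover have "\<not> (env t u (i - 1) (fst q) < snd q \<and> snd q < env t u i (fst q))"
    proof
      assume "env t u (i - 1) (fst q) < snd q \<and> snd q < env t u i (fst q)"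
      then have "q \<in> {p. env t u (i - 1) (fst p) < snd p \<and> snd p < env t u i (fst p)}" by simp
      then show False using AB2 Q(2) by blast
    qed
    ultimately have "env t u (i - 1) (fst q) \<le> snd q \<and> snd q \<le> env t u i (fst q)"
      "\<not> (env t u (i - 1) (fst q) < snd q \<and> snd q < env t u i (fst q))" by auto
    then show "q \<in> {p. env t u (i - 1) (fst p) = snd p \<or> snd p = env t u i (fst p)}" by auto
  qed
  also have "\<dots> \<subseteq> Gam t u N"
  proof
    fix q assume "q \<in> {p. env t u (i - 1) (fst p) = snd p \<or> snd p = env t u i (fst p)}"
    then have "q = (fst q, env t u (i - 1) (fst q)) \<or> q = (fst q, env t u i (fst q))" by (cases q) auto
    moreover have "i - 1 \<le> N" "i \<le> N" using i by auto
    ultimately show "q \<in> Gam t u N" unfolding Gam_def by blast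
  qed
  finally show ?thesis .
qed

lemma skeleton_sub: "skeleton t u N \<subseteq> Gam t u N"
  unfolding skeleton_def
proof (rule UN_least)
  fix F assume "F \<in> faces t u N"
  then have "F = outer_face t u N \<or> (\<exists>i\<in>{1..N}. F = GG t u i)" using faces_sub by blast
  then show "frontier F \<subseteq> Gam t u N" using frontier_outer frontier_GG by blast
qed

lemma Gam_sub: "Gam t u N \<subseteq> skeleton t u N"
proof
  fix q assume "q \<in> Gam t u N"
  then obtain x k where q: "q = (x, env t u k x)" and k: "k \<le> N" unfolding Gam_def by auto
  define M where "M = {m. k \<le> m \<and> m \<le> N \<and> env t u m x = env t u k x}"
  have fM: "finite M" unfolding M_def by (rule finite_subset[of _ "{..N}"]) auto
  have kM: "k \<in> M" using k by (simp add: M_def)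
  define m where "m = Max M"
  have mM: "m \<in> M" using fM kM Max_in unfolding m_def by blast
  have mmax: "\<And>m'. m' \<in> M \<Longrightarrow> m' \<le> m" using fM by (simp add: m_def)
  show "q \<in> skeleton t u N"
  proof (cases "m = N")
    case True
    have eqN: "env t u N x = env t u k x" using mM True by (simp add: M_def)
    have of: "outer_face t u N = {p. env t u N (fst p) < snd p}" using outer_face_eq by simp
    have "q \<in> frontier (outer_face t u N)"
    proof (rule frontier_pt)
      show "q \<notin> outer_face t u N" using q eqN of by simp
      fix e :: real assume e: "e > 0"
      have "(x, env t u N x + e/2) \<in> outer_face t u N" using of e by simp
      moreover have "dist (x, env t u N x + e/2) q < e" using e q eqN by (simp add: dist_pp)
      ultimately show "\<exists>z\<in>outer_face t u N. dist z q < e" by blast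
    qed
    moreover have "outer_face t u N \<in> faces t u N" by (simp add: faces_def)
    ultimately show ?thesis unfolding skeleton_def by (rule UN_I[rotated])
  next
    case False
    then have mN: "m < N" using mM by (simp add: M_def)
    have "Suc m \<notin> M" using mmax by (metis Suc_n_not_le_n)
    then have ne: "env t u (Suc m) x \<noteq> env t u k x" using mM mN by (simp add: M_def)
    have em: "env t u m x = env t u k x" using mM by (simp add: M_def)
    have lt: "env t u m x < env t u (Suc m) x" using ne em env_mono[of m "Suc m" t u x] by simp
    have i: "Suc m \<in> {1..N}" using mN by simp
    have "q \<in> frontier (GG t u (Suc m))"
    proof (rule frontier_pt)
      show "q \<notin> GG t u (Suc m)" using q em by (simp add: GG_def)
      fix e :: real assume e: "e > 0"
      define d where "d = min (e/2) (env t u (Suc m) x - env t u m x)"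
      have d: "0 < d" "d < e" "d \<le> env t u (Suc m) x - env t u m x" using e lt by (auto simp: d_def)
      have "(x, env t u m x + d) \<in> GG t u (Suc m)" using d by (simp add: GG_def)
      moreover have "dist (x, env t u m x + d) q < e" using d q em by (simp add: dist_pp)
      ultimately show "\<exists>z\<in>GG t u (Suc m). dist z q < e" by blast
    qed
    moreover have "GG t u (Suc m) \<in> faces t u N"
    proof -
      have "GG t u (Suc m) \<noteq> {}" using calculation by (metis frontier_empty empty_iff)
      then have "labeled_faces t u (Suc m) = {GG t u (Suc m)}" using labeled_faces_eq[OF i] by simp
      then have "GG t u (Suc m) \<in> labeled_faces t u (Suc m)" by simp
      then show ?thesis using i unfolding faces_def by (intro insertI2 UN_I)
    qed
    ultimately show ?thesis unfolding skeleton_def by (rule UN_I[rotated])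
  qed
qed

lemma skeleton_eq: "skeleton t u N = Gam t u N"
  using skeleton_sub Gam_sub by blast

end




lemma fin_min:
  fixes n :: nat
  assumes mono: "\<And>k d d'. P k d \<Longrightarrow> 0 < d' \<Longrightarrow> d' \<le> d \<Longrightarrow> P k d'"
    and each: "\<And>k. k \<le> n \<Longrightarrow> \<exists>d>0. P k d"
  shows "\<exists>d>0. \<forall>k\<le>n. P k (d::real)"
  using each
proof (induction n)
  case 0 then show ?case by auto
next
  case (Suc n)
  obtain d1 where d1: "d1 > 0" "\<forall>k\<le>n. P k d1" using Suc by auto
  obtain d2 where d2: "d2 > 0" "P (Suc n) d2" using Suc.prems by auto
  have "\<forall>k\<le>Suc n. P k (min d1 d2)"
    using d1 d2 mono by (auto simp: le_Suc_eq)
  then show ?case using d1 d2 by (intro exI[of _ "min d1 d2"]) auto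
qed

lemma abs_sep:
  assumes "\<bar>(a::real) - b\<bar> < r" "r \<le> \<bar>b - y\<bar> / 2" shows "r < \<bar>a - y\<bar>"
proof -
  have "\<bar>b - y\<bar> \<le> \<bar>b - a\<bar> + \<bar>a - y\<bar>" using abs_triangle_ineq[of "b - a" "a - y"] by simp
  then show ?thesis using assms by (simp add: abs_minus_commute)
qed

definition BB :: "real \<Rightarrow> (nat \<Rightarrow> real \<times> real) \<Rightarrow> nat \<Rightarrow> (real \<times> real) set" where
  "BB t u N = (\<Union>k\<in>{1..N}. (\<lambda>x. (x, env t u (k - 1) x)) ` {Inf (JJ t u k), Sup (JJ t u k)})"

lemma BB_finite: "finite (BB t u N)" by (simp add: BB_def)

lemma BB_card: "card (BB t u N) \<le> 2 * N"
proof -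
  have "card (BB t u N) \<le> (\<Sum>k\<in>{1..N}. card ((\<lambda>x. (x, env t u (k - 1) x)) ` {Inf (JJ t u k), Sup (JJ t u k)}))"
    unfolding BB_def by (rule card_UN_le) simp
  also have "\<dots> \<le> (\<Sum>k\<in>{1..N}. 2)"
  proof (rule sum_mono)
    fix k
    have "card ((\<lambda>x. (x, env t u (k - 1) x)) ` {Inf (JJ t u k), Sup (JJ t u k)}) \<le> card {Inf (JJ t u k), Sup (JJ t u k)}"
      by (rule card_image_le) simp
    also have "\<dots> \<le> 2" by (simp add: card_insert_if)
    finally show "card ((\<lambda>x. (x, env t u (k - 1) x)) ` {Inf (JJ t u k), Sup (JJ t u k)}) \<le> 2" .
  qed
  also have "\<dots> = 2 * N" by simp
  finally show ?thesis .
qed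

context setting
begin

lemma JJ_bounded: "i \<in> {1..N} \<Longrightarrow> JJ t u i \<subseteq> {fst (u i) - 1 .. fst (u i) + 1}"
proof
  fix x assume i: "i \<in> {1..N}" and x: "x \<in> JJ t u i"
  have ci: "snd (u i) \<le> t" using hy[OF i] by simp
  have "t < ff t (u i) x" using x JJ_iff[OF i] by simp
  then have "(x - fst (u i))^2 < 1 - (t - snd (u i))^2" using ff_gt_t[OF ci] by simp
  moreover have "0 \<le> (t - snd (u i))^2" by simp
  ultimately have "(x - fst (u i))^2 < 1" by linarith
  then have "\<bar>x - fst (u i)\<bar> < 1" by (simp add: abs_square_less_1)
  then show "x \<in> {fst (u i) - 1 .. fst (u i) + 1}" by auto
qed

lemma JJ_closure:
  assumes i: "i \<in> {1..N}" and x: "x \<in> closure (JJ t u i)" "x \<notin> JJ t u i"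
  shows "x = Inf (JJ t u i) \<or> x = Sup (JJ t u i)"
proof -
  let ?J = "JJ t u i"
  have ne: "?J \<noteq> {}" using x by auto
  have bb: "bdd_below ?J" "bdd_above ?J" using JJ_bounded[OF i]
    by (auto intro: bdd_below_mono bdd_above_mono)
  have "?J \<subseteq> {Inf ?J .. Sup ?J}" using bb by (auto intro: cInf_lower cSup_upper)
  then have "closure ?J \<subseteq> {Inf ?J .. Sup ?J}" by (intro closure_minimal) auto
  then have le: "Inf ?J \<le> x" "x \<le> Sup ?J" using x by auto
  show ?thesis
  proof (rule ccontr)
    assume "\<not> ?thesis"
    then have "Inf ?J < x" "x < Sup ?J" using le by auto
    then obtain y1 y3 where "y1 \<in> ?J" "y1 < x" "y3 \<in> ?J" "x < y3"
      using cInf_less_iff[OF ne bb(1)] less_cSup_iff[OF ne bb(2)] by blast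
    then have "x \<in> ?J" using JJ_between[OF i] by (meson less_imp_le)
    then show False using x by simp
  qed
qed

lemma ball_fst: "q \<in> ball p e \<Longrightarrow> \<bar>fst q - fst p\<bar> < e"
  using dist_fst_le[of p q] by (simp add: dist_real_def dist_commute abs_minus_commute)

lemma ball_snd: "q \<in> ball p e \<Longrightarrow> \<bar>snd q - snd p\<bar> < e"
  using dist_snd_le[of p q] by (simp add: dist_real_def dist_commute abs_minus_commute)

lemma vertices_sub: "vertices t u N \<subseteq> BB t u N"
proof
  fix p assume pV: "p \<in> vertices t u N"
  show "p \<in> BB t u N"
  proof (rule ccontr)
    assume pB: "p \<notin> BB t u N"
    have pG: "p \<in> Gam t u N" using pV skeleton_eq by (simp add: vertices_def)
    then obtain x0 k0 where p: "p = (x0, env t u k0 x0)" and k0: "k0 \<le> N" unfolding Gam_def by auto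
    define y0 where "y0 = env t u k0 x0"
    define kmin where "kmin = (LEAST k. k \<le> N \<and> env t u k x0 = y0)"
    have kminP: "kmin \<le> N \<and> env t u kmin x0 = y0"
      unfolding kmin_def by (rule LeastI[of _ k0]) (simp add: k0 y0_def)
    have kminL: "\<And>k. k < kmin \<Longrightarrow> \<not> (k \<le> N \<and> env t u k x0 = y0)"
      unfolding kmin_def by (rule not_less_Least)
    have kmin_le: "kmin \<le> k" if "k \<le> N" "env t u k x0 = y0" for k
      using kminL[of k] that by (meson not_less)
    have squeeze: "env t u j x0 = y0" if "kmin \<le> j" "j \<le> k" "env t u k x0 = y0" for k j
    proof -
      have "env t u kmin x0 \<le> env t u j x0" using that(1) by (rule env_mono)
      moreover have "env t u j x0 \<le> env t u k x0" using that(2) by (rule env_mono)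
      ultimately show ?thesis using kminP that(3) by linarith
    qed
    obtain rho where rho: "rho > 0" "\<forall>k\<le>N. env t u k x0 \<noteq> y0 \<longrightarrow> rho \<le> \<bar>env t u k x0 - y0\<bar> / 2"
    proof -
      have "\<exists>d>0. \<forall>k\<le>N. (env t u k x0 \<noteq> y0 \<longrightarrow> d \<le> \<bar>env t u k x0 - y0\<bar> / 2)"
      proof (rule fin_min)
        fix k assume "k \<le> N"
        show "\<exists>d>0. env t u k x0 \<noteq> y0 \<longrightarrow> d \<le> \<bar>env t u k x0 - y0\<bar> / 2"
          by (cases "env t u k x0 = y0") (auto intro: exI[of _ 1] exI[of _ "\<bar>env t u k x0 - y0\<bar> / 2"])
      qed auto
      then show ?thesis using that by blast
    qed
    define R where "R = (\<lambda>k x. (env t u k x0 = y0 \<and> kmin < k \<longrightarrow> env t u k x = env t u (k - 1) x)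
                             \<and> (env t u k x0 \<noteq> y0 \<longrightarrow> rho < \<bar>env t u k x - y0\<bar>))"
    have "\<exists>d>0. \<forall>k\<le>N. \<forall>x. \<bar>x - x0\<bar> < d \<longrightarrow> R k x"
    proof (rule fin_min)
      fix k d d' assume "\<forall>x. \<bar>x - x0\<bar> < d \<longrightarrow> R k x" "0 < d'" "d' \<le> (d::real)"
      then show "\<forall>x. \<bar>x - x0\<bar> < d' \<longrightarrow> R k x" by auto
    next
      fix k assume kN: "k \<le> N"
      show "\<exists>d>0. \<forall>x. \<bar>x - x0\<bar> < d \<longrightarrow> R k x"
      proof (cases "env t u k x0 = y0")
        case True
        show ?thesis
        proof (cases "kmin < k")
          case False then show ?thesis using True by (auto simp: R_def intro: exI[of _ 1])
        next
          case lt: True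
          have k1: "1 \<le> k" "k \<in> {1..N}" using lt kN by auto
          have ek1: "env t u (k - 1) x0 = y0" using squeeze[of "k - 1" k] lt True by simp
          have "\<not> env t u (k - 1) x0 < env t u k x0" using True ek1 by simp
          then have notJ: "x0 \<notin> JJ t u k" using env_gt_JJ[OF k1(1), of t u x0] by simp
          have notC: "x0 \<notin> closure (JJ t u k)"
          proof
            assume "x0 \<in> closure (JJ t u k)"
            then have "x0 = Inf (JJ t u k) \<or> x0 = Sup (JJ t u k)" using JJ_closure[OF k1(2)] notJ by blast
            then have "(x0, env t u (k - 1) x0) \<in> BB t u N" unfolding BB_def using k1 by blast
            then show False using pB p ek1 y0_def by simp
          qed
          then obtain d where d: "d > 0" "\<forall>x\<in>JJ t u k. \<not> dist x x0 < d"
            unfolding closure_approachable by (auto simp: not_less)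
          have "\<forall>x. \<bar>x - x0\<bar> < d \<longrightarrow> R k x"
          proof (intro allI impI)
            fix x assume "\<bar>x - x0\<bar> < d"
            then have "x \<notin> JJ t u k" using d by (auto simp: dist_real_def)
            then show "R k x" using env_notJJ[OF k1(1)] True by (simp add: R_def)
          qed
          then show ?thesis using d by blast
        qed
      next
        case False
        have "continuous (at x0) (env t u k)" using isCont_env .
        then obtain d where d: "d > 0" "\<forall>x. dist x x0 < d \<longrightarrow> dist (env t u k x) (env t u k x0) < rho"
          unfolding continuous_at_eps_delta using rho(1) by blast
        have sep: "rho \<le> \<bar>env t u k x0 - y0\<bar> / 2" using rho(2) kN False by blast
        have "\<forall>x. \<bar>x - x0\<bar> < d \<longrightarrow> R k x"
        proof (intro allI impI)
          fix x assume "\<bar>x - x0\<bar> < d"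
          then have "\<bar>env t u k x - env t u k x0\<bar> < rho" using d by (auto simp: dist_real_def)
          then show "R k x" using abs_sep[OF _ sep] False by (simp add: R_def)
        qed
        then show ?thesis using d by blast
      qed
    qed
    then obtain delta where delta: "delta > 0" "\<forall>k\<le>N. \<forall>x. \<bar>x - x0\<bar> < delta \<longrightarrow> R k x" by blast
    have same: "env t u k x = env t u kmin x"
      if x: "\<bar>x - x0\<bar> < delta" and k: "k \<le> N" "env t u k x0 = y0" for k x
    proof -
      have "\<forall>j. kmin + j \<le> N \<and> env t u (kmin + j) x0 = y0 \<longrightarrow> env t u (kmin + j) x = env t u kmin x"
      proof (intro allI)
        fix j show "kmin + j \<le> N \<and> env t u (kmin + j) x0 = y0 \<longrightarrow> env t u (kmin + j) x = env t u kmin x"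
        proof (induction j)
          case 0 then show ?case by simp
        next
          case (Suc j)
          show ?case
          proof
            assume h: "kmin + Suc j \<le> N \<and> env t u (kmin + Suc j) x0 = y0"
            have "env t u (kmin + j) x0 = y0" using squeeze[of "kmin + j" "kmin + Suc j"] h by simp
            then have IH: "env t u (kmin + j) x = env t u kmin x" using Suc h by simp
            have "R (kmin + Suc j) x" using delta h x by blast
            then have "env t u (kmin + Suc j) x = env t u (kmin + Suc j - 1) x" using h by (simp add: R_def)
            then show "env t u (kmin + Suc j) x = env t u kmin x" using IH by simp
          qed
        qed
      qed
      moreover have "kmin \<le> k" using kmin_le k by blast
      then have kk: "kmin + (k - kmin) = k" by simp
      ultimately show ?thesis using k kk by (metis (no_types, lifting))
    qed
    have local: "\<And>q e. q \<in> ball p e \<Longrightarrow> e \<le> delta \<Longrightarrow> e \<le> rho \<Longrightarrow> q \<in> Gam t u N \<longleftrightarrow> snd q = env t u kmin (fst q)"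
    proof -
      fix q e assume q: "q \<in> ball p e" and e: "e \<le> delta" "e \<le> rho"
      have qx: "\<bar>fst q - x0\<bar> < delta" using ball_fst[OF q] e p by simp
      have qy: "\<bar>snd q - y0\<bar> < rho" using ball_snd[OF q] e p y0_def by simp
      show "q \<in> Gam t u N \<longleftrightarrow> snd q = env t u kmin (fst q)"
      proof
        assume "q \<in> Gam t u N"
        then obtain k where k: "k \<le> N" "snd q = env t u k (fst q)" unfolding Gam_def by auto
        have "env t u k x0 = y0"
        proof (rule ccontr)
          assume "env t u k x0 \<noteq> y0"
          then have "rho < \<bar>env t u k (fst q) - y0\<bar>" using delta k qx unfolding R_def by blast
          then show False using qy k by simp
        qed
        then show "snd q = env t u kmin (fst q)" using same[OF qx k(1)] k by simp
      next
        assume "snd q = env t u kmin (fst q)"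
        then have "q = (fst q, env t u kmin (fst q))" by (simp add: prod_eq_iff)
        then show "q \<in> Gam t u N" unfolding Gam_def using kminP by blast
      qed
    qed
    have "\<exists>e>0. \<exists>C\<in>curves t u N. skeleton t u N \<inter> ball p e = C \<inter> ball p e"
    proof (cases "kmin = 0")
      case True
      have y0t: "y0 = t" using kminP True by simp
      define e where "e = min delta rho"
      have "skeleton t u N \<inter> ball p e = topline t \<inter> ball p e"
        using local[of _ e] True unfolding skeleton_eq e_def topline_def by auto
      moreover have "topline t \<in> curves t u N" by (simp add: curves_def)
      moreover have "e > 0" using delta rho by (simp add: e_def)
      ultimately show ?thesis by blast
    next
      case False
      have k1: "1 \<le> kmin" "kmin \<in> {1..N}" using False kminP by auto
      have "env t u (kmin - 1) x0 \<noteq> y0" using kminL[of "kmin - 1"] False kminP by auto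
      then have lt: "env t u (kmin - 1) x0 < y0" using env_mono[of "kmin - 1" kmin t u x0] kminP by simp
      then have "env t u (kmin - 1) x0 < env t u kmin x0" using kminP by simp
      then have x0J: "x0 \<in> JJ t u kmin" using env_gt_JJ[OF k1(1), of t u x0] by simp
      obtain d2 where d2: "d2 > 0" "ball x0 d2 \<subseteq> JJ t u kmin" using JJ_open x0J open_contains_ball by blast
      have ty0: "t < y0" using lt env_ge[of t u "kmin - 1" x0] by linarith
      define e where "e = min (min delta rho) (min d2 (y0 - t))"
      have epos: "e > 0" using delta rho d2 ty0 by (simp add: e_def)
      define c where "c = u kmin"
      have cy: "snd c \<le> t" using hy[OF k1(2)] by (simp add: c_def)
      have "skeleton t u N \<inter> ball p e = sphere c 1 \<inter> ball p e"
      proof (intro set_eqI iffI)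
        fix q assume "q \<in> skeleton t u N \<inter> ball p e"
        then have q: "q \<in> ball p e" "snd q = env t u kmin (fst q)"
          using local[of q e] unfolding skeleton_eq e_def by auto
        have "\<bar>fst q - x0\<bar> < d2" using ball_fst[OF q(1)] p by (simp add: e_def)
        then have qJ: "fst q \<in> JJ t u kmin" using d2 by (auto simp: dist_real_def)
        have ef: "env t u kmin (fst q) = ff t c (fst q)" using env_JJ[OF k1(1) qJ] by (simp add: c_def)
        have tf: "t < ff t c (fst q)" using JJ_iff[OF k1(2)] qJ by (simp add: c_def)
        have X: "(fst q - fst c)^2 < 1 - (t - snd c)^2" using ff_gt_t[OF cy] tf by simp
        moreover have "0 \<le> (t - snd c)^2" by simp
        ultimately have X1: "(fst q - fst c)^2 \<le> 1" by linarith
        have "snd q = snd c + sqrt (1 - (fst q - fst c)^2)" using q(2) ef ff_eq_top[OF tf] by simp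
        then have "(snd q - snd c)^2 = 1 - (fst q - fst c)^2" using X1 by simp
        then have "q \<in> sphere c 1" using sphere_iff[of "fst q" "snd q" "fst c" "snd c"] by simp
        then show "q \<in> sphere c 1 \<inter> ball p e" using q by simp
      next
        fix q assume qq: "q \<in> sphere c 1 \<inter> ball p e"
        then have q: "q \<in> ball p e" "(fst q - fst c)^2 + (snd q - snd c)^2 = 1"
          using sphere_iff[of "fst q" "snd q" "fst c" "snd c"] by auto
        have "\<bar>fst q - x0\<bar> < d2" using ball_fst[OF q(1)] p by (simp add: e_def)
        then have qJ: "fst q \<in> JJ t u kmin" using d2 by (auto simp: dist_real_def)
        have ef: "env t u kmin (fst q) = ff t c (fst q)" using env_JJ[OF k1(1) qJ] by (simp add: c_def)
        have "\<bar>snd q - y0\<bar> < y0 - t" using ball_snd[OF q(1)] p y0_def by (simp add: e_def)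
        then have tq: "t < snd q" by simp
        have "sqrt (1 - (fst q - fst c)^2) = snd q - snd c"
          using q(2) tq cy by (intro real_sqrt_unique) auto
        then have "ff t c (fst q) = snd q" using tq by (simp add: ff_def)
        then have "snd q = env t u kmin (fst q)" using ef by simp
        then show "q \<in> skeleton t u N \<inter> ball p e"
          using local[of q e] q(1) unfolding skeleton_eq e_def by auto
      qed
      moreover have "sphere c 1 \<in> curves t u N" using k1 by (simp add: curves_def c_def)
      ultimately show ?thesis using epos by blast
    qed
    then show False using pV unfolding vertices_def by blast
  qed
qed

lemma vertices_finite: "finite (vertices t u N)"
  using vertices_sub BB_finite finite_subset by blast

lemma vertices_card: "card (vertices t u N) \<le> 2 * N"
  using card_mono[OF BB_finite vertices_sub] BB_card le_trans by blast

end




definition J' :: "real \<Rightarrow> (nat \<Rightarrow> real \<times> real) \<Rightarrow> nat \<Rightarrow> real set" where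
  "J' t u j = (if j = 0 then UNIV else JJ t u j)"

definition phi :: "real \<Rightarrow> (nat \<Rightarrow> real \<times> real) \<Rightarrow> nat \<Rightarrow> real \<Rightarrow> real \<times> real" where
  "phi t u j x = (x, env t u j x)"

definition Str :: "real \<Rightarrow> (nat \<Rightarrow> real \<times> real) \<Rightarrow> nat \<Rightarrow> (real \<times> real) set" where
  "Str t u j = phi t u j ` J' t u j"

lemma phi_cont: "continuous_on S (phi t u j)"
  unfolding phi_def by (intro continuous_intros env_cont)

context setting
begin

lemma J'_between:
  assumes j: "j \<le> N" and x: "x1 \<in> J' t u j" "x3 \<in> J' t u j" "x1 \<le> x2" "x2 \<le> x3"
  shows "x2 \<in> J' t u j"
proof (cases "j = 0")
  case True then show ?thesis by (simp add: J'_def)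
next
  case False
  then have j1: "j \<in> {1..N}" using j by simp
  show ?thesis using x False JJ_between[OF j1, of x1 x3 x2] by (simp add: J'_def)
qed

lemma Gam_strands: "Gam t u N = (\<Union>j\<in>{..N}. Str t u j)"
proof (intro set_eqI iffI)
  fix q assume "q \<in> Gam t u N"
  then obtain x k where q: "q = (x, env t u k x)" and k: "k \<le> N" unfolding Gam_def by auto
  define m where "m = (LEAST m. env t u m x = env t u k x)"
  have mP: "env t u m x = env t u k x" unfolding m_def by (rule LeastI[of _ k]) simp
  have mk: "m \<le> k" unfolding m_def by (rule Least_le) simp
  show "q \<in> (\<Union>j\<in>{..N}. Str t u j)"
  proof (cases "m = 0")
    case True
    then have "q = phi t u 0 x" using q mP by (simp add: phi_def)
    then have "q \<in> Str t u 0" by (simp add: Str_def J'_def)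
    then show ?thesis by (intro UN_I[of 0]) auto
  next
    case False
    have "env t u (m - 1) x \<noteq> env t u k x" using not_less_Least[of "m - 1" "\<lambda>m. env t u m x = env t u k x"] False
      unfolding m_def[symmetric] by simp
    moreover have "env t u (m - 1) x \<le> env t u m x" by (rule env_mono) simp
    ultimately have "env t u (m - 1) x < env t u m x" using mP by simp
    then have xJ: "x \<in> JJ t u m" using env_gt_JJ[of m t u x] False by simp
    have "q = phi t u m x" using q mP by (simp add: phi_def)
    moreover have "x \<in> J' t u m" using xJ False by (simp add: J'_def)
    moreover have "m \<le> N" using mk k by simp
    ultimately have "q \<in> Str t u m" unfolding Str_def by (intro image_eqI) 
    then show ?thesis using \<open>m \<le> N\<close> by (intro UN_I[of m]) auto
  qed
next
  fix q assume "q \<in> (\<Union>j\<in>{..N}. Str t u j)"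
  then obtain j x where "j \<le> N" "q = (x, env t u j x)" by (auto simp: Str_def phi_def)
  then show "q \<in> Gam t u N" unfolding Gam_def by (intro CollectI exI conjI)
qed

lemma strand_lt: "j < k \<Longrightarrow> x \<in> J' t u k \<Longrightarrow> env t u j x < env t u k x"
proof -
  assume jk: "j < k" and x: "x \<in> J' t u k"
  have k0: "k \<noteq> 0" using jk by simp
  then have k1: "1 \<le> k" "x \<in> JJ t u k" using x by (simp_all add: J'_def)
  have "env t u (k - 1) x < env t u k x" using env_gt_JJ[OF k1(1)] k1(2) by simp
  moreover have "env t u j x \<le> env t u (k - 1) x" using jk by (intro env_mono) simp
  ultimately show ?thesis by simp
qed

lemma strand_disj: "v \<in> Str t u j \<Longrightarrow> v \<in> Str t u k \<Longrightarrow> j = k"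
proof (rule ccontr)
  assume v: "v \<in> Str t u j" "v \<in> Str t u k" and ne: "j \<noteq> k"
  obtain x where x: "x \<in> J' t u j" "v = (x, env t u j x)" using v(1) by (auto simp: Str_def phi_def)
  obtain x' where x': "x' \<in> J' t u k" "v = (x', env t u k x')" using v(2) by (auto simp: Str_def phi_def)
  have xx: "x' = x" "env t u j x = env t u k x" using x x' by auto
  show False
  proof (cases "j < k")
    case True
    have "x \<in> J' t u k" using x'(1) xx(1) by simp
    then have "env t u j x < env t u k x" by (rule strand_lt[OF True])
    then show False using xx(2) by simp
  next
    case False
    then have "k < j" using ne by simp
    then have "env t u k x < env t u j x" using x(1) by (rule strand_lt)
    then show False using xx(2) by simp
  qed
qed

end

definition XX :: "real \<Rightarrow> (nat \<Rightarrow> real \<times> real) \<Rightarrow> (real \<times> real) set \<Rightarrow> nat \<Rightarrow> real set" where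
  "XX t u V j = fst ` (V \<inter> Str t u j)"

definition PL :: "real \<Rightarrow> (nat \<Rightarrow> real \<times> real) \<Rightarrow> (real \<times> real) set \<Rightarrow> nat \<Rightarrow> real \<times> real \<Rightarrow> (real \<times> real) set" where
  "PL t u V j v = phi t u j ` {x \<in> J' t u j. x < fst v \<and> (\<forall>z\<in>XX t u V j. z < fst v \<longrightarrow> z < x)}"

definition PE :: "real \<Rightarrow> (nat \<Rightarrow> real \<times> real) \<Rightarrow> (real \<times> real) set \<Rightarrow> nat \<Rightarrow> (real \<times> real) set" where
  "PE t u V j = phi t u j ` {x \<in> J' t u j. \<forall>z\<in>XX t u V j. z < x}"

definition II :: "real \<Rightarrow> (nat \<Rightarrow> real \<times> real) \<Rightarrow> nat \<Rightarrow> (real \<times> real) set \<Rightarrow> (nat \<times> (real \<times> real)) set" where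
  "II t u N V = {(j, v). j \<le> N \<and> v \<in> V \<inter> Str t u j}"

definition Pset :: "real \<Rightarrow> (nat \<Rightarrow> real \<times> real) \<Rightarrow> nat \<Rightarrow> (real \<times> real) set \<Rightarrow> (real \<times> real) set set" where
  "Pset t u N V = (\<lambda>(j, v). PL t u V j v) ` II t u N V \<union> PE t u V ` {..N}"

context setting
begin

lemma II_finite: "finite V \<Longrightarrow> finite (II t u N V)"
  by (rule finite_subset[of _ "{..N} \<times> V"]) (auto simp: II_def)

lemma II_card: "finite V \<Longrightarrow> card (II t u N V) \<le> card V"
proof -
  assume fV: "finite V"
  have "inj_on snd (II t u N V)"
  proof (rule inj_onI)
    fix a b assume a: "a \<in> II t u N V" and b: "b \<in> II t u N V" and e: "snd a = snd b"
    obtain j v where av: "a = (j, v)" "v \<in> Str t u j" using a by (auto simp: II_def)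
    obtain k w where bw: "b = (k, w)" "w \<in> Str t u k" using b by (auto simp: II_def)
    have "v = w" using e av bw by simp
    then have "j = k" using strand_disj av bw by blast
    then show "a = b" using av bw \<open>v = w\<close> by simp
  qed
  moreover have "snd ` II t u N V \<subseteq> V" by (auto simp: II_def)
  ultimately show ?thesis using card_inj_on_le fV by blast
qed

lemma Pset_finite: "finite V \<Longrightarrow> finite (Pset t u N V)"
  unfolding Pset_def using II_finite by blast

lemma Pset_card: "finite V \<Longrightarrow> card (Pset t u N V) \<le> card V + (N + 1)"
proof -
  assume fV: "finite V"
  have "card (Pset t u N V) \<le> card ((\<lambda>(j, v). PL t u V j v) ` II t u N V) + card (PE t u V ` {..N})"
    unfolding Pset_def by (rule card_Un_le)
  also have "\<dots> \<le> card (II t u N V) + card {..N}"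
    by (intro add_mono card_image_le II_finite fV) simp
  also have "\<dots> \<le> card V + (N + 1)" using II_card[OF fV] by simp
  finally show ?thesis .
qed

lemma XX_mem: "phi t u j x \<in> V \<Longrightarrow> x \<in> J' t u j \<Longrightarrow> x \<in> XX t u V j"
  unfolding XX_def Str_def by (rule image_eqI[of _ _ "phi t u j x"]) (auto simp: phi_def)

lemma Str_sub: "j \<le> N \<Longrightarrow> Str t u j \<subseteq> skeleton t u N"
  using skeleton_eq Gam_strands by blast

lemma P_props:
  assumes P: "P \<in> Pset t u N (vertices t u N)"
  shows "connected P \<and> P \<subseteq> skeleton t u N - vertices t u N"
proof -
  let ?V = "vertices t u N"
  consider (L) j v where "j \<le> N" "P = PL t u ?V j v" | (E) j where "j \<le> N" "P = PE t u ?V j"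
    using P unfolding Pset_def II_def by auto
  then show ?thesis
  proof cases
    case L
    define D where "D = {x \<in> J' t u j. x < fst v \<and> (\<forall>z\<in>XX t u ?V j. z < fst v \<longrightarrow> z < x)}"
    have PD: "P = phi t u j ` D" using L by (simp add: PL_def D_def)
    have "is_interval D" unfolding is_interval_1
    proof (intro ballI allI impI)
      fix a b x assume a: "a \<in> D" and b: "b \<in> D" and x: "a \<le> x \<and> x \<le> b"
      have "x \<in> J' t u j" using J'_between[OF L(1), of a b x] a b x by (simp add: D_def)
      then show "x \<in> D" using a b x unfolding D_def by force
    qed
    then have cD: "connected D" using is_interval_connected_1 by blast
    have conn: "connected P" unfolding PD by (rule connected_continuous_image[OF phi_cont cD])
    have "P \<subseteq> skeleton t u N - ?V"
    proof
      fix q assume "q \<in> P"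
      then obtain x where x: "x \<in> D" "q = phi t u j x" using PD by blast
      have xJ: "x \<in> J' t u j" using x by (simp add: D_def)
      have "q \<in> Str t u j" using x xJ by (simp add: Str_def)
      then have "q \<in> skeleton t u N" using Str_sub[OF L(1)] by blast
      moreover have "q \<notin> ?V"
      proof
        assume "q \<in> ?V"
        then have xX: "x \<in> XX t u ?V j" using XX_mem xJ x by simp
        have h: "\<forall>z\<in>XX t u ?V j. z < fst v \<longrightarrow> z < x" "x < fst v" using x(1) by (simp_all add: D_def)
        show False using h xX by blast
      qed
      ultimately show "q \<in> skeleton t u N - ?V" by simp
    qed
    then show ?thesis using conn by simp
  next
    case E
    define D where "D = {x \<in> J' t u j. \<forall>z\<in>XX t u ?V j. z < x}"
    have PD: "P = phi t u j ` D" using E by (simp add: PE_def D_def)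
    have "is_interval D" unfolding is_interval_1
    proof (intro ballI allI impI)
      fix a b x assume a: "a \<in> D" and b: "b \<in> D" and x: "a \<le> x \<and> x \<le> b"
      have "x \<in> J' t u j" using J'_between[OF E(1), of a b x] a b x by (simp add: D_def)
      then show "x \<in> D" using a b x unfolding D_def by force
    qed
    then have cD: "connected D" using is_interval_connected_1 by blast
    have conn: "connected P" unfolding PD by (rule connected_continuous_image[OF phi_cont cD])
    have "P \<subseteq> skeleton t u N - ?V"
    proof
      fix q assume "q \<in> P"
      then obtain x where x: "x \<in> D" "q = phi t u j x" using PD by blast
      have xJ: "x \<in> J' t u j" using x by (simp add: D_def)
      have "q \<in> Str t u j" using x xJ by (simp add: Str_def)
      then have "q \<in> skeleton t u N" using Str_sub[OF E(1)] by blast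
      moreover have "q \<notin> ?V"
      proof
        assume "q \<in> ?V"
        then have xX: "x \<in> XX t u ?V j" using XX_mem xJ x by simp
        have h: "\<forall>z\<in>XX t u ?V j. z < x" using x(1) by (simp add: D_def)
        show False using h xX by blast
      qed
      ultimately show "q \<in> skeleton t u N - ?V" by simp
    qed
    then show ?thesis using conn by simp
  qed
qed

lemma cover:
  assumes q: "q \<in> skeleton t u N - vertices t u N"
  shows "\<exists>P\<in>Pset t u N (vertices t u N). q \<in> P"
proof -
  let ?V = "vertices t u N"
  have fV: "finite ?V" by (rule vertices_finite)
  have "q \<in> (\<Union>j\<in>{..N}. Str t u j)" using q skeleton_eq Gam_strands by blast
  then obtain j x where j: "j \<le> N" and x: "x \<in> J' t u j" "q = phi t u j x" by (auto simp: Str_def)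
  have qV: "q \<notin> ?V" using q by simp
  have xX: "x \<notin> XX t u ?V j"
  proof
    assume "x \<in> XX t u ?V j"
    then obtain v where v: "v \<in> ?V" "v \<in> Str t u j" "x = fst v" by (auto simp: XX_def)
    then obtain x' where "x' \<in> J' t u j" "v = phi t u j x'" by (auto simp: Str_def)
    then have "v = q" using v x by (simp add: phi_def)
    then show False using v qV by simp
  qed
  define A where "A = {z \<in> XX t u ?V j. x < z}"
  have fA: "finite A" unfolding A_def XX_def using fV by simp
  show ?thesis
  proof (cases "A = {}")
    case True
    have "\<forall>z\<in>XX t u ?V j. z < x"
    proof
      fix z assume z: "z \<in> XX t u ?V j"
      then have "z \<noteq> x" using xX by auto
      moreover have "\<not> x < z" using z True by (auto simp: A_def)
      ultimately show "z < x" by simp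
    qed
    then have "q \<in> PE t u ?V j" using x unfolding PE_def by blast
    moreover have "PE t u ?V j \<in> Pset t u N ?V" using j unfolding Pset_def by blast
    ultimately show ?thesis by blast
  next
    case False
    define a where "a = Min A"
    have aA: "a \<in> A" using fA False by (simp add: a_def)
    have amin: "\<And>z. z \<in> A \<Longrightarrow> a \<le> z" using fA by (simp add: a_def)
    obtain v where v: "v \<in> ?V" "v \<in> Str t u j" "a = fst v" using aA by (auto simp: A_def XX_def)
    have xa: "x < fst v" using aA v by (simp add: A_def)
    have "\<forall>z\<in>XX t u ?V j. z < fst v \<longrightarrow> z < x"
    proof (intro ballI impI)
      fix z assume z: "z \<in> XX t u ?V j" and zv: "z < fst v"
      then have "z \<noteq> x" using xX by auto
      moreover have "\<not> x < z"
      proof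
        assume "x < z"
        then have "z \<in> A" using z by (simp add: A_def)
        then show False using amin zv v by force
      qed
      ultimately show "z < x" by simp
    qed
    then have "q \<in> PL t u ?V j v" using x xa unfolding PL_def by blast
    moreover have "(j, v) \<in> II t u N ?V" using j v by (simp add: II_def)
    then have "PL t u ?V j v \<in> Pset t u N ?V" unfolding Pset_def by force
    ultimately show ?thesis by blast
  qed
qed

lemma edges_bound: "finite (edges t u N) \<and> card (edges t u N) \<le> card (vertices t u N) + (N + 1)"
proof -
  let ?V = "vertices t u N"
  let ?S = "skeleton t u N - ?V"
  let ?P = "Pset t u N ?V"
  have fV: "finite ?V" by (rule vertices_finite)
  have ex: "\<exists>P. P \<in> ?P \<and> P \<noteq> {} \<and> P \<subseteq> C" if C: "C \<in> edges t u N" for C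
  proof -
    obtain q where q: "q \<in> ?S" "C = connected_component_set ?S q"
      using C unfolding edges_def components_iff by blast
    obtain P where P: "P \<in> ?P" "q \<in> P" using cover[OF q(1)] by blast
    have "P \<subseteq> C" using connected_component_maximal[OF P(2)] P_props[OF P(1)] q(2) by blast
    then show ?thesis using P by blast
  qed
  define f where "f = (\<lambda>C. SOME P. P \<in> ?P \<and> P \<noteq> {} \<and> P \<subseteq> C)"
  have fP: "f C \<in> ?P \<and> f C \<noteq> {} \<and> f C \<subseteq> C" if "C \<in> edges t u N" for C
    unfolding f_def using someI_ex[OF ex[OF that]] .
  have inj: "inj_on f (edges t u N)"
  proof (rule inj_onI)
    fix C C' assume C: "C \<in> edges t u N" and C': "C' \<in> edges t u N" and e: "f C = f C'"
    have "C \<inter> C' \<noteq> {}" using fP[OF C] fP[OF C'] e by blast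
    then show "C = C'" using components_nonoverlap C C' unfolding edges_def by blast
  qed
  have sub: "f ` edges t u N \<subseteq> ?P" using fP by blast
  have fin: "finite (edges t u N)"
    using finite_imageD[OF finite_subset[OF sub Pset_finite[OF fV]] inj] .
  have "card (edges t u N) \<le> card ?P" using card_inj_on_le[OF inj sub Pset_finite[OF fV]] .
  also have "\<dots> \<le> card ?V + (N + 1)" using Pset_card[OF fV] .
  finally show ?thesis using fin by simp
qed

end




theorem corollary1:
  "\<exists>C::real. \<forall>(a::real) (b::real) (N::nat) (u::nat \<Rightarrow> real \<times> real).
     (\<forall>i\<in>{1..N}. u i \<in> sq a b) \<longrightarrow>
       ((N \<ge> 1 \<longrightarrow>
           finite (faces (b + 1/2) u N) \<and> finite (vertices (b + 1/2) u N) \<and>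
           finite (edges (b + 1/2) u N) \<and>
           real (complexity (b + 1/2) u N) \<le> C * real N) \<and>
        (\<forall>i\<in>{1..N}. \<forall>A\<in>labeled_faces (b + 1/2) u i. \<forall>B\<in>labeled_faces (b + 1/2) u i. A = B))"
proof (intro exI[of _ 8] allI impI)
  fix a b :: real and N :: nat and u :: "nat \<Rightarrow> real \<times> real"
  assume h: "\<forall>i\<in>{1..N}. u i \<in> sq a b"
  interpret S: setting "b + 1/2" u N a
  proof
    fix i assume "i \<in> {1..N}"
    then have "u i \<in> sq a b" using h by blast
    then show "a \<le> fst (u i) \<and> fst (u i) \<le> a + 1/2" "b + 1/2 - 1/2 \<le> snd (u i) \<and> snd (u i) \<le> b + 1/2"
      by (auto simp: sq_def)
  qed
  have part2: "\<forall>i\<in>{1..N}. \<forall>A\<in>labeled_faces (b + 1/2) u i. \<forall>B\<in>labeled_faces (b + 1/2) u i. A = B"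
    using S.labeled_faces_sub by blast
  have part1: "finite (faces (b + 1/2) u N) \<and> finite (vertices (b + 1/2) u N) \<and>
           finite (edges (b + 1/2) u N) \<and>
           real (complexity (b + 1/2) u N) \<le> 8 * real N" if N1: "N \<ge> 1"
  proof -
    have f1: "card (faces (b + 1/2) u N) \<le> N + 1" by (rule S.faces_card)
    have f2: "card (vertices (b + 1/2) u N) \<le> 2 * N" by (rule S.vertices_card)
    have f3: "card (edges (b + 1/2) u N) \<le> card (vertices (b + 1/2) u N) + (N + 1)"
      using S.edges_bound by blast
    have "complexity (b + 1/2) u N \<le> 8 * N"
      unfolding complexity_def using f1 f2 f3 N1 by linarith
    then have "real (complexity (b + 1/2) u N) \<le> real (8 * N)" by (simp only: of_nat_le_iff)
    then have c: "real (complexity (b + 1/2) u N) \<le> 8 * real N" by simp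
    show ?thesis using S.faces_finite S.vertices_finite S.edges_bound c by blast
  qed
  show "(N \<ge> 1 \<longrightarrow>
           finite (faces (b + 1/2) u N) \<and> finite (vertices (b + 1/2) u N) \<and>
           finite (edges (b + 1/2) u N) \<and>
           real (complexity (b + 1/2) u N) \<le> 8 * real N) \<and>
        (\<forall>i\<in>{1..N}. \<forall>A\<in>labeled_faces (b + 1/2) u i. \<forall>B\<in>labeled_faces (b + 1/2) u i. A = B)"
    using part1 part2 by blast
qed


end
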